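(* Let $q \ge 2$ and $n \ge 1$ be integers and let $\Sigma = \{0,1,\dots,q-1\}$. The number of words of length $2^n-1$ over $\Sigma$ that are $Z_n$ instances is exactly $q^n$.
   Context: Zimin words are defined recursively over an alphabet of variables $x_1, x_2, \dots$ by $Z_1 = x_1$ and $Z_{k+1} = Z_k\, x_{k+1}\, Z_k$; thus $Z_k$ has length $2^k-1$ and uses the $k$ distinct letters $x_1,\dots,x_k$ (e.g. $Z_2 = x_1x_2x_1$, $Z_3 = x_1x_2x_1x_3x_1x_2x_1$). A word $W$ over $\Sigma$ is an instance of a word $V$ (a "$V$ instance") if there is a non-erasing monoid homomorphism $\phi$ from words over the letters of $V$ to $\Sigma^+$ (i.e. every letter is sent to a nonempty word) with $\phi(V) = W$. *)

theory Defs
  imports Main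
begin

text \<open>Zimin words over the variable alphabet nat: the variable x_(i+1) is encoded as i.
  zimin 0 is the empty word (auxiliary), zimin (Suc k) = zimin k @ [k] @ zimin k,
  so zimin 1 = [0] = Z_1 and zimin k = Z_k uses variables 0..k-1.\<close>
fun zimin :: "nat \<Rightarrow> nat list" where
  "zimin 0 = []"
| "zimin (Suc k) = zimin k @ [k] @ zimin k"

definition is_instance :: "'a list \<Rightarrow> 'v list \<Rightarrow> bool" where
  "is_instance W V \<longleftrightarrow>
     (\<exists>\<phi> :: 'v \<Rightarrow> 'a list. (\<forall>x\<in>set V. \<phi> x \<noteq> []) \<and> concat (map \<phi> V) = W)"

end

theory Submission
  imports Defs "HOL-Library.FuncSet"
begin

lemma zimin_len: "length (zimin k) + 1 = 2 ^ k"
  by (induction k) auto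

lemma zimin_set: "set (zimin k) = {0..<k}"
  by (induction k) auto

lemma len_ge:
  assumes "\<forall>x\<in>set V. \<phi> x \<noteq> []"
  shows "length (concat (map \<phi> V)) \<ge> length V"
  using assms
proof (induction V)
  case Nil then show ?case by simp
next
  case (Cons a V)
  then have "length (\<phi> a) \<ge> 1" by (simp add: Suc_le_eq)
  with Cons show ?case by simp
qed

lemma len_one:
  assumes "\<forall>x\<in>set V. \<phi> x \<noteq> []" "length (concat (map \<phi> V)) = length V"
  shows "\<forall>x\<in>set V. length (\<phi> x) = 1"
  using assms
proof (induction V)
  case Nil then show ?case by simp
next
  case (Cons a V)
  have a: "length (\<phi> a) \<ge> 1" using Cons.prems by (simp add: Suc_le_eq)
  have b: "length (concat (map \<phi> V)) \<ge> length V"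
    using Cons.prems(1) len_ge[of V \<phi>] by simp
  have "length (\<phi> a) + length (concat (map \<phi> V)) = 1 + length V"
    using Cons.prems(2) by simp
  with a b have c: "length (\<phi> a) = 1" "length (concat (map \<phi> V)) = length V" by linarith+
  have "\<forall>x\<in>set V. length (\<phi> x) = 1" using Cons.IH Cons.prems(1) c(2) by simp
  with c(1) show ?case by simp
qed

lemma concat_single:
  assumes "\<forall>x\<in>set V. length (\<phi> x) = 1"
  shows "concat (map \<phi> V) = map (\<lambda>x. hd (\<phi> x)) V"
  using assms
proof (induction V)
  case Nil then show ?case by simp
next
  case (Cons a V)
  then have "length (\<phi> a) = 1" by simp
  then obtain c where "\<phi> a = [c]" by (cases "\<phi> a") auto
  with Cons show ?case by simp
qed
lemma set_eq:
  "{w :: nat list. length w = 2 ^ n - 1 \<and> set w \<subseteq> {0..<q} \<and> is_instance w (zimin n)}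
   = (\<lambda>g. map g (zimin n)) ` ({0..<n} \<rightarrow>\<^sub>E {0..<q})"
proof (intro equalityI subsetI)
  fix w assume "w \<in> {w :: nat list. length w = 2 ^ n - 1 \<and> set w \<subseteq> {0..<q} \<and> is_instance w (zimin n)}"
  then have L: "length w = 2 ^ n - 1" and S: "set w \<subseteq> {0..<q}" and I: "is_instance w (zimin n)" by auto
  from I obtain \<phi> :: "nat \<Rightarrow> nat list" where ne: "\<forall>x\<in>set (zimin n). \<phi> x \<noteq> []"
    and eq: "concat (map \<phi> (zimin n)) = w" unfolding is_instance_def by blast
  have ll: "length (concat (map \<phi> (zimin n))) = length (zimin n)"
    using eq L zimin_len[of n] by simp
  have one: "\<forall>x\<in>set (zimin n). length (\<phi> x) = 1" using len_one[OF ne ll] .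
  define g where "g = restrict (\<lambda>x. hd (\<phi> x)) {0..<n}"
  have w: "w = map g (zimin n)"
    using concat_single[OF one] eq unfolding g_def by (auto simp: zimin_set)
  have "g \<in> {0..<n} \<rightarrow>\<^sub>E {0..<q}"
  proof
    fix x assume x: "x \<in> {0..<n}"
    then have "g x \<in> set w" using w by (simp add: zimin_set)
    then show "g x \<in> {0..<q}" using S by blast
  next
    fix x assume "x \<notin> {0..<n}" then show "g x = undefined" by (simp add: g_def)
  qed
  with w show "w \<in> (\<lambda>g. map g (zimin n)) ` ({0..<n} \<rightarrow>\<^sub>E {0..<q})" by blast
next
  fix w assume "w \<in> (\<lambda>g. map g (zimin n)) ` ({0..<n} \<rightarrow>\<^sub>E {0..<q})"
  then obtain g where g: "g \<in> {0..<n} \<rightarrow>\<^sub>E {0..<q}" and w: "w = map g (zimin n)" by blast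
  have "length w = 2 ^ n - 1" using w zimin_len[of n] by simp
  moreover have "set w \<subseteq> {0..<q}" using w g by (auto simp: zimin_set)
  moreover have "is_instance w (zimin n)" unfolding is_instance_def
    by (rule exI[of _ "\<lambda>x. [g x]"]) (simp add: w map_concat)
  ultimately show "w \<in> {w :: nat list. length w = 2 ^ n - 1 \<and> set w \<subseteq> {0..<q} \<and> is_instance w (zimin n)}"
    by blast
qed

lemma inj: "inj_on (\<lambda>g. map g (zimin n)) ({0..<n} \<rightarrow>\<^sub>E {0..<q})"
proof
  fix g h assume g: "g \<in> {0..<n} \<rightarrow>\<^sub>E {0..<q}" and h: "h \<in> {0..<n} \<rightarrow>\<^sub>E {0..<q}"
    and e: "map g (zimin n) = map h (zimin n)"
  then have "\<forall>x\<in>{0..<n}. g x = h x" by (simp add: map_eq_conv zimin_set)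
  then show "g = h" using g h by (auto intro: PiE_ext)
qed

theorem lemma1:
  fixes q n :: nat
  assumes "q \<ge> 2" and "n \<ge> 1"
  shows "card {w :: nat list. length w = 2 ^ n - 1 \<and> set w \<subseteq> {0..<q}
                 \<and> is_instance w (zimin n)} = q ^ n"
  unfolding set_eq card_image[OF inj] by (simp add: card_PiE)

end
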